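(* Let $R$ be a principal ideal domain and $a\in R$ with $Ra\neq 0$. Then the left ideal $Ra$ is extremely prime if and only if $a$ is irreducible and invariant.
   Context: A principal ideal domain (PID) is a (not necessarily commutative) domain in which every left ideal and every right ideal is principal. A left ideal $\mathfrak{p}$ is extremely prime if $\mathfrak{p}\neq R$ and for $a,b\in R$, $ab\in\mathfrak{p}$ implies $a\in\mathfrak{p}$ or $b\in\mathfrak{p}$. A non-unit $a$ is irreducible if $a=bc$ implies $b$ or $c$ is a unit. A nonzero $a$ is invariant if $Ra=aR$. *)

theory Defs
  imports Main
begin

definition left_ideal :: "'a::ring_1 set \<Rightarrow> bool" where
  "left_ideal I \<longleftrightarrow> 0 \<in> I \<and> (\<forall>x\<in>I. \<forall>y\<in>I. x + y \<in> I) \<and> (\<forall>r. \<forall>x\<in>I. r * x \<in> I)"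

definition right_ideal :: "'a::ring_1 set \<Rightarrow> bool" where
  "right_ideal I \<longleftrightarrow> 0 \<in> I \<and> (\<forall>x\<in>I. \<forall>y\<in>I. x + y \<in> I) \<and> (\<forall>r. \<forall>x\<in>I. x * r \<in> I)"

definition lprinc :: "'a::ring_1 \<Rightarrow> 'a set" where
  "lprinc a = {r * a | r. True}"

definition rprinc :: "'a::ring_1 \<Rightarrow> 'a set" where
  "rprinc a = {a * r | r. True}"

text \<open>The ring (type) is a PID: every left ideal and every right ideal is principal
  (the domain property is provided by the type class).\<close>
definition pid_ring :: "'a::ring_1_no_zero_divisors itself \<Rightarrow> bool" where
  "pid_ring _ \<longleftrightarrow>
     (\<forall>I::'a set. left_ideal I \<longrightarrow> (\<exists>a. I = lprinc a)) \<and>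
     (\<forall>I::'a set. right_ideal I \<longrightarrow> (\<exists>a. I = rprinc a))"

definition extremely_prime :: "'a::ring_1 set \<Rightarrow> bool" where
  "extremely_prime P \<longleftrightarrow> P \<noteq> UNIV \<and> (\<forall>a b. a * b \<in> P \<longrightarrow> a \<in> P \<or> b \<in> P)"

definition nc_unit :: "'a::ring_1 \<Rightarrow> bool" where
  "nc_unit a \<longleftrightarrow> (\<exists>b. a * b = 1 \<and> b * a = 1)"

definition nc_irreducible :: "'a::ring_1 \<Rightarrow> bool" where
  "nc_irreducible a \<longleftrightarrow> \<not> nc_unit a \<and> (\<forall>b c. a = b * c \<longrightarrow> nc_unit b \<or> nc_unit c)"

definition invariant :: "'a::ring_1 \<Rightarrow> bool" where
  "invariant a \<longleftrightarrow> a \<noteq> 0 \<and> lprinc a = rprinc a"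

end

theory Submission
  imports Defs
begin

lemma lp_iff: "x \<in> lprinc a \<longleftrightarrow> (\<exists>r. x = r * a)"
  by (auto simp: lprinc_def)

lemma rp_iff: "x \<in> rprinc a \<longleftrightarrow> (\<exists>r. x = a * r)"
  by (auto simp: rprinc_def)

lemma inv_comm:
  fixes x :: "'a::ring_1_no_zero_divisors"
  assumes "x * y = 1" shows "y * x = 1"
proof -
  have "x * (y * x - 1) = 0" using assms
    by (simp add: right_diff_distrib mult.assoc[symmetric])
  moreover have "x \<noteq> 0" using assms by auto
  ultimately show ?thesis by simp
qed

lemma lp_diff: "x \<in> lprinc a \<Longrightarrow> y \<in> lprinc a \<Longrightarrow> x - y \<in> lprinc a"
  by (auto simp: lp_iff left_diff_distrib[symmetric])

lemma lp_add: "x \<in> lprinc a \<Longrightarrow> y \<in> lprinc a \<Longrightarrow> x + y \<in> lprinc a"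
  by (auto simp: lp_iff distrib_right[symmetric])

lemma lp_mult: "x \<in> lprinc a \<Longrightarrow> r * x \<in> lprinc a"
  by (auto simp: lp_iff) (metis mult.assoc)

lemma pad_sum:
  fixes f :: "nat \<Rightarrow> 'a::comm_monoid_add"
  assumes "n \<le> m"
  shows "(\<Sum>k<m. if k < n then f k else 0) = (\<Sum>k<n. f k)"
  using assms
proof (induction m)
  case 0 then show ?case by simp
next
  case (Suc m)
  show ?case
  proof (cases "n = Suc m")
    case True
    then show ?thesis by (intro sum.cong) auto
  next
    case False
    then have "n \<le> m" using Suc.prems by simp
    then show ?thesis using Suc.IH by simp
  qed
qed

lemma aR_sub:
  fixes a :: "'a::ring_1_no_zero_divisors"
  assumes pid: "pid_ring TYPE('a)" and a0: "a \<noteq> 0"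
    and ep: "extremely_prime (lprinc a)"
  shows "a * r \<in> lprinc a"
proof (cases "r \<in> lprinc a")
  case True
  then obtain s where "r = s * a" by (auto simp: lp_iff)
  then show ?thesis by (auto simp: lp_iff mult.assoc[symmetric])
next
  case False
  let ?P = "lprinc a"
  have canc: "x * r \<in> ?P \<Longrightarrow> x \<in> ?P" for x
    using ep False unfolding extremely_prime_def by blast
  have H: "\<forall>q. (\<Sum>k<n. q k * a * r ^ Suc k) - a * r ^ Suc n \<in> ?P \<longrightarrow> a * r \<in> ?P" for n
  proof (induction n)
    case 0
    show ?case
    proof (intro allI impI)
      fix q :: "nat \<Rightarrow> 'a"
      assume "(\<Sum>k<0. q k * a * r ^ Suc k) - a * r ^ Suc 0 \<in> ?P"
      then have "0 - (0 - a * r) \<in> ?P" using lp_diff[of 0 a] by (simp add: lp_iff) (metis minus_minus mult_zero_left)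
      then show "a * r \<in> ?P" by simp
    qed
  next
    case (Suc n)
    show ?case
    proof (intro allI impI)
      fix q :: "nat \<Rightarrow> 'a"
      assume A: "(\<Sum>k<Suc n. q k * a * r ^ Suc k) - a * r ^ Suc (Suc n) \<in> ?P"
      have eq: "(\<Sum>k<Suc n. q k * a * r ^ Suc k) - a * r ^ Suc (Suc n)
          = ((\<Sum>k<Suc n. q k * a * r ^ k) - a * r ^ Suc n) * r"
        by (simp add: sum_distrib_right left_diff_distrib mult.assoc power_Suc2 distrib_right del: power_Suc)
      have B: "(\<Sum>k<Suc n. q k * a * r ^ k) - a * r ^ Suc n \<in> ?P"
        using A eq canc by metis
      have eq2: "(\<Sum>k<Suc n. q k * a * r ^ k) - a * r ^ Suc n
          = q 0 * a + ((\<Sum>k<n. q (Suc k) * a * r ^ Suc k) - a * r ^ Suc n)"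
        using sum.lessThan_Suc_shift[of "\<lambda>k. q k * a * r ^ k" n] by (simp add: add_diff_eq del: sum.lessThan_Suc)
      have "q 0 * a \<in> ?P" by (auto simp: lp_iff)
      then have "((\<Sum>k<n. q (Suc k) * a * r ^ Suc k) - a * r ^ Suc n) \<in> ?P"
        using lp_diff[OF B, of "q 0 * a"] eq2 by simp
      then show "a * r \<in> ?P" using Suc.IH[rule_format, of "\<lambda>k. q (Suc k)"] by simp
    qed
  qed
  define J where "J = {x. \<exists>n q. x = (\<Sum>k<n. q k * a * r ^ k)}"
  have "left_ideal J"
    unfolding left_ideal_def
  proof (intro conjI ballI allI)
    show "0 \<in> J" unfolding J_def by (rule CollectI, rule exI[of _ 0]) simp
  next
    fix x y assume "x \<in> J" "y \<in> J"
    then obtain n1 q1 n2 q2 where x: "x = (\<Sum>k<n1. q1 k * a * r ^ k)"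
      and y: "y = (\<Sum>k<n2. q2 k * a * r ^ k)" unfolding J_def by blast
    define m where "m = max n1 n2"
    define q where "q k = (if k < n1 then q1 k else 0) + (if k < n2 then q2 k else 0)" for k
    have "(\<Sum>k<m. q k * a * r ^ k) = (\<Sum>k<m. if k < n1 then q1 k * a * r ^ k else 0)
        + (\<Sum>k<m. if k < n2 then q2 k * a * r ^ k else 0)"
      unfolding q_def by (simp add: distrib_right sum.distrib[symmetric]) (intro sum.cong; simp)
    also have "\<dots> = x + y" unfolding x y
      by (subst pad_sum, simp add: m_def, subst pad_sum, simp add: m_def, simp)
    finally show "x + y \<in> J" unfolding J_def by (intro CollectI exI[of _ m] exI[of _ q]) (rule sym)
  next
    fix s x assume "x \<in> J"
    then obtain n q where x: "x = (\<Sum>k<n. q k * a * r ^ k)" unfolding J_def by blast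
    have "s * x = (\<Sum>k<n. (s * q k) * a * r ^ k)"
      unfolding x by (simp add: sum_distrib_left mult.assoc)
    then show "s * x \<in> J" unfolding J_def by (intro CollectI exI[of _ n] exI[of _ "\<lambda>k. s * q k"])
  qed
  then obtain g where Jg: "J = lprinc g" using pid unfolding pid_ring_def by blast
  have "g \<in> J" unfolding Jg lp_iff by (rule exI[of _ 1]) simp
  then obtain N q where g: "g = (\<Sum>k<N. q k * a * r ^ k)" unfolding J_def by blast
  have "a * r ^ N = (\<Sum>k<Suc N. (if k = N then 1 else 0) * a * r ^ k)"
    by simp
  then have "a * r ^ N \<in> J" unfolding J_def by (intro CollectI exI[of _ "Suc N"] exI[of _ "\<lambda>k. if k = N then 1 else 0"])
  then obtain t where "a * r ^ N = t * g" unfolding Jg lp_iff by blast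
  then have aN: "a * r ^ N = (\<Sum>k<N. (t * q k) * a * r ^ k)"
    unfolding g by (simp add: sum_distrib_left mult.assoc)
  show ?thesis
  proof (cases N)
    case 0
    then show ?thesis using aN a0 by simp
  next
    case (Suc n)
    define p where "p k = t * q k" for k
    have "a * r ^ Suc n = p 0 * a + (\<Sum>k<n. p (Suc k) * a * r ^ Suc k)"
    proof -
      have "a * r ^ Suc n = (\<Sum>k<Suc n. p k * a * r ^ k)" using aN Suc p_def by simp
      then show ?thesis by (simp only: sum.lessThan_Suc_shift power_0 mult_1_right)
    qed
    then have "(\<Sum>k<n. p (Suc k) * a * r ^ Suc k) - a * r ^ Suc n = - (p 0 * a)"
      by (simp add: algebra_simps)
    moreover have "- (p 0 * a) \<in> ?P" by (auto simp: lp_iff) (metis minus_mult_left)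
    ultimately show ?thesis using H[of n, rule_format, of "\<lambda>k. p (Suc k)"] by simp
  qed
qed

theorem proposition3p2:
  fixes a :: "'a::ring_1_no_zero_divisors"
  assumes "pid_ring TYPE('a)"
    and "lprinc a \<noteq> {0}"
  shows "extremely_prime (lprinc a) \<longleftrightarrow> nc_irreducible a \<and> invariant a"
proof -
  have a0: "a \<noteq> 0" using assms(2) by (auto simp: lprinc_def)
  have pid: "pid_ring TYPE('a)" by fact
  show ?thesis
  proof
    assume ep: "extremely_prime (lprinc a)"
    have sub1: "a * r \<in> lprinc a" for r using aR_sub[OF pid a0 ep] .
    have "right_ideal (lprinc a)"
      unfolding right_ideal_def
    proof (intro conjI ballI allI)
      show "0 \<in> lprinc a" by (auto simp: lp_iff)
    next
      fix x y assume "x \<in> lprinc a" "y \<in> lprinc a" then show "x + y \<in> lprinc a" by (rule lp_add)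
    next
      fix r x assume "x \<in> lprinc a"
      then obtain c where x: "x = c * a" by (auto simp: lp_iff)
      obtain s where "a * r = s * a" using sub1[of r] by (auto simp: lp_iff)
      then have "x * r = (c * s) * a" unfolding x by (simp add: mult.assoc)
      then show "x * r \<in> lprinc a" by (auto simp: lp_iff)
    qed
    then obtain b where Rb: "lprinc a = rprinc b" using pid unfolding pid_ring_def by blast
    have "a \<in> rprinc b" unfolding Rb[symmetric] lp_iff by (rule exI[of _ 1]) simp
    then obtain t where at: "a = b * t" by (auto simp: rp_iff)
    have "b \<in> lprinc a" unfolding Rb rp_iff by (rule exI[of _ 1]) simp
    then obtain u where bu: "b = u * a" by (auto simp: lp_iff)
    obtain s where ats: "a * t = s * a" using sub1[of t] by (auto simp: lp_iff)
    have "(u * s) * a = 1 * a" using at bu ats by (simp add: mult.assoc)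
    then have us: "u * s = 1" using a0 by (simp only: mult_cancel_right) simp
    then have su: "s * u = 1" by (rule inv_comm)
    have sub2: "x * a \<in> rprinc a" for x
    proof -
      have "(u * x) * a \<in> rprinc b" unfolding Rb[symmetric] lp_iff by blast
      then obtain z where "u * x * a = b * z" by (auto simp: rp_iff)
      then have "s * (u * x * a) = s * (u * a * z)" using bu by simp
      then have "x * a = a * z" using su by (simp add: mult.assoc[symmetric])
      then show ?thesis by (auto simp: rp_iff)
    qed
    have inv: "invariant a"
      unfolding invariant_def
    proof (intro conjI)
      show "a \<noteq> 0" by fact
      show "lprinc a = rprinc a"
      proof
        show "lprinc a \<subseteq> rprinc a" using sub2 by (auto simp: lp_iff)
        show "rprinc a \<subseteq> lprinc a" using sub1 by (auto simp: rp_iff)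
      qed
    qed
    have nu: "\<not> nc_unit a"
    proof
      assume "nc_unit a"
      then obtain c where "c * a = 1" by (auto simp: nc_unit_def)
      then have "x \<in> lprinc a" for x unfolding lp_iff
        by (metis mult.assoc mult_1_right)
      then show False using ep unfolding extremely_prime_def by blast
    qed
    have "nc_unit b \<or> nc_unit c" if "a = b * c" for b c
    proof -
      have "b * c \<in> lprinc a" using that by (auto simp: lp_iff)
      then have "b \<in> lprinc a \<or> c \<in> lprinc a" using ep unfolding extremely_prime_def by blast
      then show ?thesis
      proof
        assume "c \<in> lprinc a"
        then obtain t where "c = t * a" by (auto simp: lp_iff)
        then have "(b * t) * a = 1 * a" using that by (simp add: mult.assoc)
        then have "b * t = 1" using a0 by (simp only: mult_cancel_right) simp
        then show ?thesis using inv_comm[of b t] unfolding nc_unit_def by blast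
      next
        assume "b \<in> lprinc a"
        then have "b \<in> rprinc a" using inv unfolding invariant_def by simp
        then obtain t where "b = a * t" by (auto simp: rp_iff)
        then have "a * (t * c) = b * c" by (simp add: mult.assoc)
        then have "a * (t * c) = a * 1" using that by simp
        then have "t * c = 1" using a0 by (simp only: mult_cancel_left) simp
        then show ?thesis using inv_comm[of t c] unfolding nc_unit_def by blast
      qed
    qed
    then show "nc_irreducible a \<and> invariant a" using nu inv unfolding nc_irreducible_def by blast
  next
    assume H: "nc_irreducible a \<and> invariant a"
    then have irr: "nc_irreducible a" and inv: "lprinc a = rprinc a"
      by (auto simp: invariant_def)
    have notU: "lprinc a \<noteq> UNIV"
    proof
      assume "lprinc a = UNIV"
      then have "1 \<in> lprinc a" by simp
      then obtain t where t: "1 = t * a" by (auto simp: lp_iff)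
      have "1 \<in> rprinc a" using \<open>1 \<in> lprinc a\<close> inv by simp
      then obtain t' where t': "1 = a * t'" by (auto simp: rp_iff)
      have "a * t = 1" using inv_comm[of t a] t by simp
      then have "nc_unit a" using t unfolding nc_unit_def by metis
      then show False using irr unfolding nc_irreducible_def by blast
    qed
    have "y \<in> lprinc a \<or> x \<in> lprinc a" if xy: "x * y \<in> lprinc a" for x y
    proof (rule disjCI)
      assume xn: "x \<notin> lprinc a"
      define I where "I = {p * a + q * x | p q. True}"
      have "left_ideal I" unfolding left_ideal_def I_def
      proof (intro conjI ballI allI)
        show "0 \<in> {p * a + q * x | p q. True}" by (rule CollectI, rule exI[of _ 0], rule exI[of _ 0]) simp
      next
        fix u v assume "u \<in> {p * a + q * x | p q. True}" "v \<in> {p * a + q * x | p q. True}"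
        then obtain p1 q1 p2 q2 where "u = p1 * a + q1 * x" "v = p2 * a + q2 * x" by blast
        then have "u + v = (p1 + p2) * a + (q1 + q2) * x" by (simp add: algebra_simps)
        then show "u + v \<in> {p * a + q * x | p q. True}" by blast
      next
        fix r u assume "u \<in> {p * a + q * x | p q. True}"
        then obtain p1 q1 where "u = p1 * a + q1 * x" by blast
        then have "r * u = (r * p1) * a + (r * q1) * x" by (simp add: algebra_simps)
        then show "r * u \<in> {p * a + q * x | p q. True}" by blast
      qed
      then obtain d where Id: "I = lprinc d" using pid unfolding pid_ring_def by blast
      have "a \<in> I" unfolding I_def by (rule CollectI, rule exI[of _ 1], rule exI[of _ 0]) simp
      then obtain u where ud: "a = u * d" unfolding Id lp_iff by blast
      have "x \<in> I" unfolding I_def by (rule CollectI, rule exI[of _ 0], rule exI[of _ 1]) simp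
      then obtain w where xd: "x = w * d" unfolding Id lp_iff by blast
      have "nc_unit u \<or> nc_unit d" using irr ud unfolding nc_irreducible_def by blast
      then show "y \<in> lprinc a"
      proof
        assume "nc_unit u"
        then obtain v where "v * u = 1" unfolding nc_unit_def by blast
        then have "d = v * a" using ud by (simp add: mult.assoc[symmetric])
        then have "x = (w * v) * a" using xd by (simp add: mult.assoc)
        then show ?thesis using xn by (auto simp: lp_iff)
      next
        assume "nc_unit d"
        then obtain e where ed: "e * d = 1" unfolding nc_unit_def by blast
        have "1 \<in> I" unfolding Id lp_iff using ed by (intro exI[of _ e]) simp
        then obtain \<alpha> \<beta> where ab: "1 = \<alpha> * a + \<beta> * x" unfolding I_def by blast
        have "y = (\<alpha> * a + \<beta> * x) * y" using ab[symmetric] by simp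
        then have "y = \<alpha> * (a * y) + \<beta> * (x * y)"
          by (simp add: distrib_right mult.assoc)
        moreover have "a * y \<in> lprinc a" using inv by (auto simp: rp_iff)
        ultimately show ?thesis using xy lp_add[OF lp_mult lp_mult] by metis
      qed
    qed
    then show "extremely_prime (lprinc a)" using notU unfolding extremely_prime_def by blast
  qed
qed

end
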